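(* Suppose $(X_i,Y_i)_{i\in[n+m]}$ is an i.i.d. sample from $P_{XY}$. Then for all measurable $D:\mathcal X\to\{0,1\}$ and all $C:\mathcal X\to\mathcal I$, $$FCR(D,C)=mFCR(D,C)\,\mathbb P\Big(\sum_{i\in[m]}D(X_{n+i})>0\Big).$$
   Context: $\mathcal I$ is a collection of subsets of $\mathcal Y$. $FCR(D,C)=\mathbb E\left[\frac{\sum_{i\in[m]}\mathbb 1\{Y_{n+i}\notin C(X_{n+i})\}D(X_{n+i})}{1\vee\sum_{i\in[m]}D(X_{n+i})}\right]$ and, for $(X,Y)\sim P_{XY}$, $mFCR(D,C)=\frac{\mathbb E[\mathbb 1\{Y\notin C(X)\}D(X)]}{\mathbb E[D(X)]}$, with the convention that the ratio is $0$ if the denominator is $0$. *)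

theory Defs
  imports "HOL-Probability.Probability"
begin

definition FCR :: "'a measure \<Rightarrow> (nat \<Rightarrow> 'a \<Rightarrow> 'x) \<Rightarrow> (nat \<Rightarrow> 'a \<Rightarrow> 'y) \<Rightarrow> nat \<Rightarrow> nat
    \<Rightarrow> ('x \<Rightarrow> bool) \<Rightarrow> ('x \<Rightarrow> 'y set) \<Rightarrow> real" where
  "FCR M X Y n m D C =
     (\<integral>\<omega>. (\<Sum>i\<in>{1..m}. of_bool (Y (n+i) \<omega> \<notin> C (X (n+i) \<omega>)) * of_bool (D (X (n+i) \<omega>)))
          / max 1 (\<Sum>i\<in>{1..m}. of_bool (D (X (n+i) \<omega>))) \<partial>M)"

text \<open>Marginal false coverage rate under the joint law P of (X,Y);
  division by zero yields 0 in Isabelle, matching the stated convention.\<close>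
definition mFCR :: "('x \<times> 'y) measure \<Rightarrow> ('x \<Rightarrow> bool) \<Rightarrow> ('x \<Rightarrow> 'y set) \<Rightarrow> real" where
  "mFCR P D C =
     (\<integral>z. of_bool (snd z \<notin> C (fst z)) * of_bool (D (fst z)) \<partial>P) / (\<integral>z. of_bool (D (fst z)) \<partial>P)"

end

theory Submission
  imports Defs
begin

theorem proposition1:
  fixes M :: "'a measure" and MX :: "'x measure" and MY :: "'y measure"
    and P :: "('x \<times> 'y) measure"
    and X :: "nat \<Rightarrow> 'a \<Rightarrow> 'x" and Y :: "nat \<Rightarrow> 'a \<Rightarrow> 'y"
    and n m :: nat and I :: "'y set set"
    and D :: "'x \<Rightarrow> bool" and C :: "'x \<Rightarrow> 'y set"
  assumes "prob_space M"
    and "\<And>i. i \<in> {1..n+m} \<Longrightarrow> X i \<in> M \<rightarrow>\<^sub>M MX"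
    and "\<And>i. i \<in> {1..n+m} \<Longrightarrow> Y i \<in> M \<rightarrow>\<^sub>M MY"
    and "prob_space.indep_vars M (\<lambda>_. MX \<Otimes>\<^sub>M MY) (\<lambda>i \<omega>. (X i \<omega>, Y i \<omega>)) {1..n+m}"
    and "\<And>i. i \<in> {1..n+m} \<Longrightarrow> distr M (MX \<Otimes>\<^sub>M MY) (\<lambda>\<omega>. (X i \<omega>, Y i \<omega>)) = P"
    and "D \<in> MX \<rightarrow>\<^sub>M count_space UNIV"
    and "\<And>x. C x \<in> I"
    and "{z \<in> space (MX \<Otimes>\<^sub>M MY). snd z \<in> C (fst z)} \<in> sets (MX \<Otimes>\<^sub>M MY)"
  shows "FCR M X Y n m D C
           = mFCR P D C * measure M {\<omega> \<in> space M. (\<Sum>i\<in>{1..m}. of_bool (D (X (n+i) \<omega>)) :: real) > 0}"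
proof -
  interpret prob_space M by fact
  define N where "N = MX \<Otimes>\<^sub>M MY"
  define Z where "Z i \<omega> = (X i \<omega>, Y i \<omega>)" for i \<omega>
  define f :: "'x \<times> 'y \<Rightarrow> real" where "f z = of_bool (snd z \<notin> C (fst z)) * of_bool (D (fst z))" for z
  define d :: "'x \<times> 'y \<Rightarrow> real" where "d z = of_bool (D (fst z))" for z
  define K where "K i = (\<lambda>j. n + j) ` ({1..m} - {i})" for i
  define g where "g i \<omega> = 1 / (1 + (\<Sum>j\<in>K i. d (Z j \<omega>)))" for i \<omega>
  have Dm: "(\<lambda>z. D (fst z)) \<in> N \<rightarrow>\<^sub>M count_space UNIV"
    unfolding N_def using assms(6) by measurable
  have Sm: "{z \<in> space N. snd z \<in> C (fst z)} \<in> sets N" using assms(8) by (simp add: N_def)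
  have dm: "d \<in> borel_measurable N"
  proof -
    have "(\<lambda>b::bool. of_bool b :: real) \<in> count_space UNIV \<rightarrow>\<^sub>M borel" by simp
    from measurable_comp[OF Dm this] show ?thesis unfolding d_def[abs_def] by (simp add: comp_def)
  qed
  have em: "(\<lambda>z. of_bool (snd z \<notin> C (fst z)) :: real) \<in> borel_measurable N"
  proof -
    have "(\<lambda>z. of_bool (snd z \<notin> C (fst z)) :: real) \<in> borel_measurable N
       \<longleftrightarrow> (\<lambda>z. 1 - indicator {z \<in> space N. snd z \<in> C (fst z)} z :: real) \<in> borel_measurable N"
      by (intro measurable_cong) (auto simp: indicator_def)
    moreover have "(\<lambda>z. 1 - indicator {z \<in> space N. snd z \<in> C (fst z)} z :: real) \<in> borel_measurable N"
      using Sm by measurable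
    ultimately show ?thesis by simp
  qed
  have fm: "f \<in> borel_measurable N"
    using em dm unfolding f_def d_def[symmetric] by measurable
  have Zm: "Z i \<in> M \<rightarrow>\<^sub>M N" if "i \<in> {1..n+m}" for i
    using assms(2,3)[OF that] unfolding Z_def N_def by measurable
  have ind: "indep_vars (\<lambda>_. N) Z {1..n+m}"
    using assms(4) unfolding Z_def N_def .
  have f01: "0 \<le> f z" "f z \<le> 1" "f z \<le> d z" for z by (auto simp: f_def d_def)
  have d01: "0 \<le> d z" "d z \<le> 1" for z by (auto simp: d_def)
  have Kidx: "K i \<subseteq> {1..n+m}" "n + i \<notin> K i" if "i \<in> {1..m}" for i
    using that by (auto simp: K_def)
  have gm: "g i \<in> borel_measurable M" if "i \<in> {1..m}" for i
  proof -
    have "(\<lambda>\<omega>. d (Z j \<omega>)) \<in> borel_measurable M" if "j \<in> K i" for j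
      using measurable_compose[OF Zm dm] Kidx(1)[OF \<open>i \<in> {1..m}\<close>] that by blast
    then show ?thesis unfolding g_def
      by (intro borel_measurable_divide borel_measurable_add borel_measurable_sum) auto
  qed
  have g01: "0 \<le> g i \<omega>" "g i \<omega> \<le> 1" for i \<omega>
  proof -
    have "0 \<le> (\<Sum>j\<in>K i. d (Z j \<omega>))" by (intro sum_nonneg) (simp add: d01)
    then show "0 \<le> g i \<omega>" "g i \<omega> \<le> 1" by (auto simp: g_def)
  qed
  have key: "(\<integral>\<omega>. h (Z (n+i) \<omega>) * g i \<omega> \<partial>M) = (\<integral>z. h z \<partial>P) * (\<integral>\<omega>. g i \<omega> \<partial>M)"
    if i: "i \<in> {1..m}" and hm: "h \<in> borel_measurable N" and hb: "\<And>z. \<bar>h z\<bar> \<le> 1" for i h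
  proof -
    have "indep_var (PiM {n+i} (\<lambda>_. N)) (\<lambda>\<omega>. restrict (\<lambda>j. Z j \<omega>) {n+i})
                    (PiM (K i) (\<lambda>_. N)) (\<lambda>\<omega>. restrict (\<lambda>j. Z j \<omega>) (K i))"
      by (rule indep_var_restrict[OF ind]) (use i Kidx[OF i] in auto)
    then have "indep_var borel ((\<lambda>w. h (w (n+i))) \<circ> (\<lambda>\<omega>. restrict (\<lambda>j. Z j \<omega>) {n+i}))
        borel ((\<lambda>w. 1 / (1 + (\<Sum>j\<in>K i. d (w j)))) \<circ> (\<lambda>\<omega>. restrict (\<lambda>j. Z j \<omega>) (K i)))"
    proof (rule indep_var_compose)
      show "(\<lambda>w. h (w (n+i))) \<in> borel_measurable (PiM {n+i} (\<lambda>_. N))"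
        by (rule measurable_compose[OF measurable_component_singleton[of "n+i" "{n+i}" "\<lambda>_. N"] hm]) simp
      have "(\<lambda>w. d (w j)) \<in> borel_measurable (PiM (K i) (\<lambda>_. N))" if "j \<in> K i" for j
        by (rule measurable_compose[OF measurable_component_singleton[of j "K i" "\<lambda>_. N"] dm]) (rule that)
      then show "(\<lambda>w. 1 / (1 + (\<Sum>j\<in>K i. d (w j)))) \<in> borel_measurable (PiM (K i) (\<lambda>_. N))"
        by (intro borel_measurable_divide borel_measurable_add borel_measurable_sum) auto
    qed
    moreover have "((\<lambda>w. h (w (n+i))) \<circ> (\<lambda>\<omega>. restrict (\<lambda>j. Z j \<omega>) {n+i})) = (\<lambda>\<omega>. h (Z (n+i) \<omega>))"
      by (auto simp: fun_eq_iff)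
    moreover have "((\<lambda>w. 1 / (1 + (\<Sum>j\<in>K i. d (w j)))) \<circ> (\<lambda>\<omega>. restrict (\<lambda>j. Z j \<omega>) (K i))) = g i"
      by (auto simp: fun_eq_iff g_def intro!: sum.cong arg_cong[where f="\<lambda>x. 1 / (1 + x)"])
    ultimately have iv: "indep_var borel (\<lambda>\<omega>. h (Z (n+i) \<omega>)) borel (g i)" by simp
    have Zi: "Z (n+i) \<in> M \<rightarrow>\<^sub>M N" using i by (intro Zm) auto
    have hZ: "(\<lambda>\<omega>. h (Z (n+i) \<omega>)) \<in> borel_measurable M" using Zi hm by measurable
    have int1: "integrable M (\<lambda>\<omega>. h (Z (n+i) \<omega>))"
      by (rule integrable_const_bound[where B=1]) (use hZ hb in auto)
    have int2: "integrable M (g i)"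
      by (rule integrable_const_bound[where B=1]) (use gm[OF i] g01 in auto)
    have "(\<integral>\<omega>. h (Z (n+i) \<omega>) \<partial>M) = (\<integral>z. h z \<partial>P)"
    proof -
      have "Z (n+i) = (\<lambda>\<omega>. (X (n+i) \<omega>, Y (n+i) \<omega>))" by (simp add: fun_eq_iff Z_def)
      then show ?thesis using assms(5)[of "n+i"] i integral_distr[OF Zi hm] by (auto simp: N_def)
    qed
    with indep_var_lebesgue_integral[OF iv int1 int2] show ?thesis by simp
  qed
  define a where "a = (\<integral>z. f z \<partial>P)"
  define b where "b = (\<integral>z. d z \<partial>P)"
  define c where "c i = (\<integral>\<omega>. g i \<omega> \<partial>M)" for i
  define S where "S \<omega> = (\<Sum>j\<in>{1..m}. d (Z (n+j) \<omega>))" for \<omega>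
  have Ssplit: "S \<omega> = d (Z (n+i) \<omega>) + (\<Sum>j\<in>K i. d (Z j \<omega>))" if i: "i \<in> {1..m}" for i \<omega>
  proof -
    have "(\<Sum>j\<in>K i. d (Z j \<omega>)) = (\<Sum>j\<in>{1..m} - {i}. d (Z (n+j) \<omega>))"
      unfolding K_def by (subst sum.reindex) (auto simp: inj_on_def)
    then show ?thesis unfolding S_def using i by (simp add: sum.remove)
  qed
  have Rnn: "0 \<le> (\<Sum>j\<in>K i. d (Z j \<omega>))" for i \<omega> by (intro sum_nonneg) (simp add: d01)
  have termw: "h (Z (n+i) \<omega>) / max 1 (S \<omega>) = h (Z (n+i) \<omega>) * g i \<omega>"
    if i: "i \<in> {1..m}" and hz: "\<And>z. \<not> D (fst z) \<Longrightarrow> h z = 0" for i \<omega> h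
  proof (cases "D (fst (Z (n+i) \<omega>))")
    case True
    then have "S \<omega> = 1 + (\<Sum>j\<in>K i. d (Z j \<omega>))" using Ssplit[OF i] by (simp add: d_def)
    then show ?thesis using Rnn by (simp add: g_def max_def divide_inverse)
  next
    case False then show ?thesis using hz by simp
  qed
  have Sge: "S \<omega> > 0 \<Longrightarrow> S \<omega> \<ge> 1" for \<omega>
  proof -
    assume "S \<omega> > 0"
    then obtain j where j: "j \<in> {1..m}" "d (Z (n+j) \<omega>) \<noteq> 0" unfolding S_def
      by (metis (no_types, lifting) less_irrefl sum.neutral)
    then have "d (Z (n+j) \<omega>) = 1" by (simp add: d_def)
    moreover have "d (Z (n+j) \<omega>) \<le> S \<omega>" unfolding S_def
      using j by (intro member_le_sum) (auto simp: d01)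
    ultimately show ?thesis by simp
  qed
  have Snn: "S \<omega> \<ge> 0" for \<omega> unfolding S_def by (intro sum_nonneg) (simp add: d01)
  have Sm: "S \<in> borel_measurable M"
  proof -
    have "(\<lambda>\<omega>. d (Z (n+j) \<omega>)) \<in> borel_measurable M" if "j \<in> {1..m}" for j
      using measurable_compose[OF Zm dm] that by auto
    then show ?thesis unfolding S_def[abs_def] by (intro borel_measurable_sum) auto
  qed
  have intfg: "integrable M (\<lambda>\<omega>. h (Z (n+i) \<omega>) * g i \<omega>)"
    if i: "i \<in> {1..m}" and hm: "h \<in> borel_measurable N" and hb: "\<And>z. \<bar>h z\<bar> \<le> 1" for i h
  proof (rule integrable_const_bound[where B=1])
    have Zi: "Z (n+i) \<in> M \<rightarrow>\<^sub>M N" using i by (intro Zm) auto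
    show "(\<lambda>\<omega>. h (Z (n+i) \<omega>) * g i \<omega>) \<in> borel_measurable M"
      using measurable_compose[OF Zi hm] gm[OF i] by (rule borel_measurable_times)
    show "AE x in M. norm (h (Z (n+i) x) * g i x) \<le> 1"
    proof (intro AE_I2)
      fix x
      have "\<bar>h (Z (n+i) x)\<bar> * \<bar>g i x\<bar> \<le> 1 * 1"
        using hb g01 by (intro mult_mono) auto
      then show "norm (h (Z (n+i) x) * g i x) \<le> 1" by (simp add: abs_mult)
    qed
  qed
  have FCR_eq: "FCR M X Y n m D C = a * (\<Sum>i\<in>{1..m}. c i)"
  proof -
    have "FCR M X Y n m D C = (\<integral>\<omega>. (\<Sum>i\<in>{1..m}. f (Z (n+i) \<omega>) * g i \<omega>) \<partial>M)"
      unfolding FCR_def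
    proof (rule Bochner_Integration.integral_cong[OF refl])
      fix \<omega>
      have "(\<Sum>i\<in>{1..m}. of_bool (Y (n+i) \<omega> \<notin> C (X (n+i) \<omega>)) * of_bool (D (X (n+i) \<omega>)))
          / max 1 (\<Sum>i\<in>{1..m}. of_bool (D (X (n+i) \<omega>))) = (\<Sum>i\<in>{1..m}. f (Z (n+i) \<omega>) / max 1 (S \<omega>))"
        by (simp only: S_def f_def d_def Z_def fst_conv snd_conv sum_divide_distrib)
      also have "\<dots> = (\<Sum>i\<in>{1..m}. f (Z (n+i) \<omega>) * g i \<omega>)"
        by (intro sum.cong refl termw) (auto simp: f_def)
      finally show "(\<Sum>i\<in>{1..m}. of_bool (Y (n+i) \<omega> \<notin> C (X (n+i) \<omega>)) * of_bool (D (X (n+i) \<omega>)))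
          / max 1 (\<Sum>i\<in>{1..m}. of_bool (D (X (n+i) \<omega>))) = (\<Sum>i\<in>{1..m}. f (Z (n+i) \<omega>) * g i \<omega>)" .
    qed
    also have "\<dots> = (\<Sum>i\<in>{1..m}. \<integral>\<omega>. f (Z (n+i) \<omega>) * g i \<omega> \<partial>M)"
      by (rule Bochner_Integration.integral_sum, rule intfg[OF _ fm]) (auto simp: abs_le_iff f01 intro: order_trans[OF _ zero_le_one])
    also have "\<dots> = (\<Sum>i\<in>{1..m}. a * c i)"
      by (intro sum.cong refl) (auto simp: a_def c_def abs_le_iff f01 intro!: key fm intro: order_trans[OF _ zero_le_one])
    finally show ?thesis by (simp add: sum_distrib_left)
  qed
  have P_eq: "measure M {\<omega> \<in> space M. (\<Sum>i\<in>{1..m}. of_bool (D (X (n+i) \<omega>)) :: real) > 0} = b * (\<Sum>i\<in>{1..m}. c i)"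
  proof -
    have set_eq: "{\<omega> \<in> space M. (\<Sum>i\<in>{1..m}. of_bool (D (X (n+i) \<omega>)) :: real) > 0} = {\<omega> \<in> space M. S \<omega> > 0}"
      by (simp add: S_def d_def Z_def)
    have Sset: "{\<omega> \<in> space M. S \<omega> > 0} \<in> sets M" using Sm by measurable
    have "measure M {\<omega> \<in> space M. S \<omega> > 0} = (\<integral>\<omega>. indicator {\<omega> \<in> space M. S \<omega> > 0} \<omega> \<partial>M)"
      using Sset by simp
    also have "\<dots> = (\<integral>\<omega>. (\<Sum>i\<in>{1..m}. d (Z (n+i) \<omega>) * g i \<omega>) \<partial>M)"
    proof (rule Bochner_Integration.integral_cong[OF refl])
      fix \<omega> assume "\<omega> \<in> space M"
      have "indicator {\<omega> \<in> space M. S \<omega> > 0} \<omega> = (\<Sum>i\<in>{1..m}. d (Z (n+i) \<omega>) / max 1 (S \<omega>))"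
      proof (cases "S \<omega> > 0")
        case True
        then have "max 1 (S \<omega>) = S \<omega>" using Sge by simp
        then show ?thesis using True \<open>\<omega> \<in> space M\<close> by (simp add: sum_divide_distrib[symmetric] S_def)
      next
        case False
        then have "S \<omega> = 0" using Snn[of \<omega>] by simp
        then show ?thesis using False by (simp add: sum_divide_distrib[symmetric] S_def)
      qed
      also have "\<dots> = (\<Sum>i\<in>{1..m}. d (Z (n+i) \<omega>) * g i \<omega>)"
        by (intro sum.cong refl termw) (auto simp: d_def)
      finally show "indicator {\<omega> \<in> space M. S \<omega> > 0} \<omega> = (\<Sum>i\<in>{1..m}. d (Z (n+i) \<omega>) * g i \<omega>)" .
    qed
    also have "\<dots> = (\<Sum>i\<in>{1..m}. \<integral>\<omega>. d (Z (n+i) \<omega>) * g i \<omega> \<partial>M)"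
      by (rule Bochner_Integration.integral_sum, rule intfg[OF _ dm]) (auto simp: abs_le_iff d01 intro: order_trans[OF _ zero_le_one])
    also have "\<dots> = (\<Sum>i\<in>{1..m}. b * c i)"
      by (intro sum.cong refl) (auto simp: b_def c_def abs_le_iff d01 intro!: key dm intro: order_trans[OF _ zero_le_one])
    finally show ?thesis using set_eq by (simp add: sum_distrib_left)
  qed
  have mFCR_eq: "mFCR P D C = a / b"
    unfolding mFCR_def a_def b_def f_def d_def ..
  have ab: "a = 0" if "b = 0" "m \<ge> 1"
  proof -
    have i: "n + 1 \<in> {1..n+m}" using that by auto
    have Zi: "Z (n+1) \<in> M \<rightarrow>\<^sub>M N" using i by (intro Zm)
    have P': "P = distr M N (Z (n+1))"
      using assms(5)[OF i] by (simp add: N_def Z_def[abs_def])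
    have intf: "integrable P f" unfolding P' integrable_distr_eq[OF Zi fm]
      by (rule integrable_const_bound[where B=1]) (use measurable_compose[OF Zi fm] f01 in \<open>auto simp: abs_le_iff intro: order_trans[OF _ zero_le_one]\<close>)
    have intd: "integrable P d" unfolding P' integrable_distr_eq[OF Zi dm]
      by (rule integrable_const_bound[where B=1]) (use measurable_compose[OF Zi dm] d01 in \<open>auto simp: abs_le_iff intro: order_trans[OF _ zero_le_one]\<close>)
    have "a \<le> b" unfolding a_def b_def using intf intd f01 by (intro integral_mono) auto
    moreover have "0 \<le> a" unfolding a_def using f01 by (intro Bochner_Integration.integral_nonneg) auto
    ultimately show ?thesis using that by simp
  qed
  show ?thesis
  proof (cases "b = 0")
    case False then show ?thesis unfolding FCR_eq P_eq mFCR_eq by simp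
  next
    case True
    show ?thesis
    proof (cases "m \<ge> 1")
      case True then show ?thesis unfolding FCR_eq P_eq mFCR_eq using ab \<open>b = 0\<close> by simp
    next
      case False then have "m = 0" by simp
      then show ?thesis unfolding FCR_eq P_eq mFCR_eq by simp
    qed
  qed
qed

end
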